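(* For $n\ge2$, let $\ell=\lfloor (n+1)/2\rfloor$ and \[M_n(x)=2\sum_{k=1}^{\ell} d_{n,k-1}\,x^k(1+x)^{\ell-k}.\] Then $R_n(x)=(1+x)^{\lfloor (n-2)/2\rfloor}M_n(x)$, $M_n$ has nonnegative integer coefficients, and $M_n(-1)=2(-1)^{\ell}d_{n,\ell-1}\neq0$; hence $-1$ is a root of $R_n(x)$ of multiplicity exactly $\lfloor (n-2)/2\rfloor$.
   Context: $R_n(x)=\sum_{\pi\in\mathfrak S_n}x^{\mathrm{run}(\pi)}$, where $\mathrm{run}(\pi)$ is $1$ plus the number of $i\in\{2,\dots,n-1\}$ with $\pi_{i-1}<\pi_i>\pi_{i+1}$ or $\pi_{i-1}>\pi_i<\pi_{i+1}$. A descent of $\pi$ is an index $i\in[n-1]$ with $\pi_i>\pi_{i+1}$. For an index $i$, the $\pi_i$-factorization is $\pi=w_1w_2\pi_iw_4w_5$ where $w_2$ is the longest factor ending at position $i-1$ with all letters $>\pi_i$ and $w_4$ the longest factor starting at position $i+1$ with all letters $>\pi_i$. $\pi\in\mathfrak S_n$ is an André permutation if (i) no $i\in\{2,\dots,n-1\}$ has $\pi_{i-1}>\pi_i>\pi_{i+1}$, (ii) $\pi_{n-1}<\pi_n$, and (iii) for every $i\in\{2,\dots,n-1\}$ with $\pi_{i-1}>\pi_i<\pi_{i+1}$, $\max(w_2)<\max(w_4)$ in the $\pi_i$-factorization. $d_{n,i}$ is the number of André permutations in $\mathfrak S_n$ with exactly $i$ descents. *)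

theory Defs
  imports "HOL-Combinatorics.Multiset_Permutations" "HOL-Computational_Algebra.Polynomial"
begin

text \<open>Permutations of [n] are represented as lists (one-line notation); the paper's
position i (1-based) corresponds to list index i-1.\<close>

abbreviation perms :: "nat \<Rightarrow> nat list set" where
  "perms n \<equiv> permutations_of_set {1..n}"

definition turning_points :: "nat list \<Rightarrow> nat set" where
  "turning_points xs = {i. 0 < i \<and> i + 1 < length xs \<and>
     ((xs!(i-1) < xs!i \<and> xs!i > xs!(i+1)) \<or> (xs!(i-1) > xs!i \<and> xs!i < xs!(i+1)))}"

definition run :: "nat list \<Rightarrow> nat" where
  "run xs = 1 + card (turning_points xs)"

definition descents :: "nat list \<Rightarrow> nat set" where
  "descents xs = {i. i + 1 < length xs \<and> xs!i > xs!(i+1)}"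

definition fact_w2 :: "nat list \<Rightarrow> nat \<Rightarrow> nat list" where
  "fact_w2 xs i = rev (takeWhile (\<lambda>y. y > xs!i) (rev (take i xs)))"

definition fact_w4 :: "nat list \<Rightarrow> nat \<Rightarrow> nat list" where
  "fact_w4 xs i = takeWhile (\<lambda>y. y > xs!i) (drop (i+1) xs)"

definition andre :: "nat list \<Rightarrow> bool" where
  "andre xs \<longleftrightarrow>
     (\<forall>i. 0 < i \<and> i + 1 < length xs \<longrightarrow> \<not> (xs!(i-1) > xs!i \<and> xs!i > xs!(i+1))) \<and>
     (2 \<le> length xs \<longrightarrow> xs!(length xs - 2) < xs!(length xs - 1)) \<and>
     (\<forall>i. 0 < i \<and> i + 1 < length xs \<and> xs!(i-1) > xs!i \<and> xs!i < xs!(i+1) \<longrightarrow>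
          Max (set (fact_w2 xs i)) < Max (set (fact_w4 xs i)))"

definition d :: "nat \<Rightarrow> nat \<Rightarrow> nat" where
  "d n i = card {xs \<in> perms n. andre xs \<and> card (descents xs) = i}"

definition R :: "nat \<Rightarrow> int poly" where
  "R n = (\<Sum>xs\<in>perms n. monom 1 (run xs))"

definition M :: "nat \<Rightarrow> int poly" where
  "M n = (let l = (n + 1) div 2 in
     2 * (\<Sum>k=1..l. smult (int (d n (k - 1))) ([:0, 1:] ^ k * [:1, 1:] ^ (l - k))))"

end

theory Submission
  imports Defs
begin


fun tpf :: "nat list \<Rightarrow> nat" where
  "tpf (a#b#c#r) = (if (a<b \<and> c<b) \<or> (b<a \<and> b<c) then 1 else 0) + tpf (b#c#r)"
| "tpf _ = 0"

lemma tp_short: "length xs < 3 \<Longrightarrow> turning_points xs = {}"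
  by (auto simp: turning_points_def)

lemma tp_cons:
  "turning_points (a#b#c#r) =
     (if (a<b \<and> c<b) \<or> (b<a \<and> b<c) then {1} else {}) \<union> Suc ` turning_points (b#c#r)"
  (is "?L = ?R")
proof (rule set_eqI)
  fix i
  show "i \<in> ?L \<longleftrightarrow> i \<in> ?R"
  proof (cases i)
    case 0 then show ?thesis by (auto simp: turning_points_def)
  next
    case (Suc k)
    show ?thesis
    proof (cases k)
      case 0 then show ?thesis using Suc by (auto simp: turning_points_def)
    next
      case (Suc k')
      then show ?thesis using \<open>i = Suc k\<close>
        by (auto simp: turning_points_def nth_Cons')
    qed
  qed
qed

lemma tp_finite: "finite (turning_points xs)"
  unfolding turning_points_def by (rule finite_subset[of _ "{..<length xs}"]) auto

lemma card_tp: "card (turning_points xs) = tpf xs"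
proof (induction xs rule: tpf.induct)
  case (1 a b c r)
  have "1 \<notin> Suc ` turning_points (b#c#r)"
    by (auto simp: turning_points_def)
  then show ?case using 1 tp_finite[of "b#c#r"]
    by (simp add: tp_cons card_insert_if card_image)
qed (auto simp: tp_short)

lemma run_tpf: "run xs = 1 + tpf xs"
  by (simp add: run_def card_tp)

definition ins :: "nat \<Rightarrow> nat \<Rightarrow> nat list \<Rightarrow> nat list" where
  "ins j N p = take j p @ N # drop j p"

lemma ins_0[simp]: "ins 0 N p = N # p" by (simp add: ins_def)
lemma ins_Suc[simp]: "ins (Suc j) N (a#p) = a # ins j N p" by (simp add: ins_def)

definition X :: "int poly" where "X = [:0,1:]"

definition Q :: "nat \<Rightarrow> nat \<Rightarrow> int poly" where
  "Q t n = of_nat (t+1) + 2 * X + (of_nat n - 2 - of_nat t) * X^2"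

lemma S_formula:
  assumes "distinct p" "\<forall>y\<in>set p. y < N" "length p \<ge> 2"
  shows "(\<Sum>j\<le>length p. X ^ tpf (ins j N p)) = X ^ tpf p * Q (tpf p) (length p)"
  using assms
proof (induction p rule: tpf.induct)
  case (1 a b c r)
  let ?q = "b#c#r"
  have IH: "(\<Sum>j\<le>length ?q. X ^ tpf (ins j N ?q)) = X ^ tpf ?q * Q (tpf ?q) (length ?q)"
    using 1 by auto
  have split1: "(\<Sum>j\<le>length (a#?q). X ^ tpf (ins j N (a#?q))) =
     X ^ tpf (N#a#?q) + X ^ tpf (a#N#?q) + X ^ tpf (a#b#N#c#r)
     + (\<Sum>j\<le>length r. X ^ tpf (a#b#c#ins j N r))"
    by (simp only: length_Cons sum.atMost_Suc_shift ins_0 ins_Suc add.assoc)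
  have split2: "(\<Sum>j\<le>length ?q. X ^ tpf (ins j N ?q)) =
     X ^ tpf (N#?q) + X ^ tpf (b#N#c#r) + (\<Sum>j\<le>length r. X ^ tpf (b#c#ins j N r))"
    by (simp only: length_Cons sum.atMost_Suc_shift ins_0 ins_Suc add.assoc)
  have tail: "(\<Sum>j\<le>length r. X ^ tpf (a#b#c#ins j N r)) =
     X ^ (if (a<b \<and> c<b) \<or> (b<a \<and> b<c) then 1 else 0) * (\<Sum>j\<le>length r. X ^ tpf (b#c#ins j N r))"
    by (simp add: sum_distrib_left power_add)
  have ab: "a \<noteq> b" "b \<noteq> c" "a < N" "b < N" "c < N" using 1(2,3) by auto
  define Rest where "Rest = (\<Sum>j\<le>length r. X ^ tpf (b#c#ins j N r))"
  have Rest_eq: "Rest = X ^ tpf ?q * Q (tpf ?q) (length ?q) - X ^ tpf (N#?q) - X ^ tpf (b#N#c#r)"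
    using IH unfolding split2 Rest_def by (simp add: algebra_simps)
  have goal: "?case \<longleftrightarrow> X ^ tpf (N#a#?q) + X ^ tpf (a#N#?q) + X ^ tpf (a#b#N#c#r)
     + X ^ (if (a<b \<and> c<b) \<or> (b<a \<and> b<c) then 1 else 0) * Rest
     = X ^ tpf (a#?q) * Q (tpf (a#?q)) (length (a#?q))"
    unfolding split1 tail Rest_def by simp
  show ?case
  proof (cases r)
    case Nil
    show ?thesis unfolding goal Rest_eq using ab
      apply (simp add: Nil Q_def del: tpf.simps)
      apply (cases "a < b"; cases "b < c")
      by (simp_all add: Q_def algebra_simps power2_eq_square) 
  next
    case (Cons e r')
    have ce: "c \<noteq> e" "e < N" using 1(2,3) Cons by auto
    define K where "K = tpf (c#e#r')"
    have eqs: "tpf (N#c#r) = (if c < e then 1 else 0) + K"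
      "tpf (b#c#r) = (if (b<c \<and> e<c) \<or> (c<b \<and> c<e) then 1 else 0) + K"
      using ce ab by (auto simp: Cons K_def)
    have len: "length r = Suc (length r')" using Cons by simp
    show ?thesis unfolding goal Rest_eq using ab ce
      apply (simp add: Q_def eqs len del: tpf.simps)
      apply (cases "a < b"; cases "b < c"; cases "c < e")
      by (simp_all add: eqs Q_def algebra_simps power2_eq_square power_add)
  qed
next
  case ("2_3" a b)
  then have "a \<noteq> b" "a < N" "b < N" by auto
  then show ?case
    by (cases "a < b") (simp_all add: Q_def numeral_2_eq_2 algebra_simps power2_eq_square)
qed auto


lemma append_Cons_same_eq:
  "N \<notin> set xs \<Longrightarrow> N \<notin> set xs' \<Longrightarrow> xs @ N # ys = xs' @ N # ys' \<Longrightarrow> xs = xs' \<and> ys = ys'"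
proof (induction xs arbitrary: xs')
  case Nil then show ?case by (cases xs') auto
next
  case (Cons a xs) then show ?case by (cases xs') auto
qed

lemma ins_set: "set (ins j N p) = insert N (set p)"
proof -
  have "set p = set (take j p) \<union> set (drop j p)"
    by (metis append_take_drop_id set_append)
  then show ?thesis by (auto simp: ins_def)
qed

lemma ins_distinct: "distinct p \<Longrightarrow> N \<notin> set p \<Longrightarrow> distinct (ins j N p)"
proof -
  assume a: "distinct p" "N \<notin> set p"
  have "distinct (take j p @ drop j p)" using a by simp
  moreover have "N \<notin> set (take j p)" "N \<notin> set (drop j p)"
    using a(2) by (auto dest: in_set_takeD in_set_dropD)
  ultimately show ?thesis unfolding ins_def by (simp only: distinct_append distinct.simps set_simps) blast
qed

lemma ins_bij:
  "bij_betw (\<lambda>(p,j). ins j (Suc n) p) (perms n \<times> {..n}) (perms (Suc n))"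
proof (rule bij_betw_imageI)
  show "inj_on (\<lambda>(p,j). ins j (Suc n) p) (perms n \<times> {..n})"
  proof (rule inj_onI)
    fix x y assume x: "x \<in> perms n \<times> {..n}" and y: "y \<in> perms n \<times> {..n}"
      and eq0: "(\<lambda>(p,j). ins j (Suc n) p) x = (\<lambda>(p,j). ins j (Suc n) p) y"
    obtain p j where xp: "x = (p,j)" by (cases x)
    obtain p' j' where yp: "y = (p',j')" by (cases y)
    have p: "p \<in> perms n" "j \<le> n" "p' \<in> perms n" "j' \<le> n" using x y xp yp by auto
    have eq: "ins j (Suc n) p = ins j' (Suc n) p'" using eq0 xp yp by simp
    have "Suc n \<notin> set p" "Suc n \<notin> set p'" using p by (auto simp: permutations_of_set_def)
    then have "Suc n \<notin> set (take j p)" "Suc n \<notin> set (take j' p')"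
      by (auto dest: in_set_takeD)
    then have tt: "take j p = take j' p' \<and> drop j p = drop j' p'"
      using eq unfolding ins_def by (rule append_Cons_same_eq)
    have l: "length p = n" "length p' = n"
      using p by (auto simp: permutations_of_set_def distinct_card[symmetric])
    have "p = p'" using tt by (metis append_take_drop_id)
    moreover have "length (take j p) = j" "length (take j' p') = j'" using l p by auto
    then have "j = j'" using tt by metis
    ultimately show "x = y" using xp yp by simp
  qed
next
  show "(\<lambda>(p,j). ins j (Suc n) p) ` (perms n \<times> {..n}) = perms (Suc n)"
  proof (rule set_eqI, rule iffI)
    fix xs assume "xs \<in> (\<lambda>(p,j). ins j (Suc n) p) ` (perms n \<times> {..n})"
    then obtain p j where p: "p \<in> perms n" "j \<le> n" and xs: "xs = ins j (Suc n) p" by auto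
    have sp: "set p = {1..n}" "distinct p" using p by (auto simp: permutations_of_set_def)
    have "set xs = {1..Suc n}" unfolding xs ins_set sp by auto
    moreover have "distinct xs" unfolding xs using sp by (intro ins_distinct) auto
    ultimately show "xs \<in> perms (Suc n)" by (simp add: permutations_of_set_def)
  next
    fix xs assume xs: "xs \<in> perms (Suc n)"
    then have "Suc n \<in> set xs" by (auto simp: permutations_of_set_def)
    then obtain ys zs where yz: "xs = ys @ Suc n # zs" by (meson split_list)
    have d: "distinct xs" "set xs = {1..Suc n}" using xs by (auto simp: permutations_of_set_def)
    have nyz: "Suc n \<notin> set ys" "Suc n \<notin> set zs" using d(1) yz by auto
    have e1: "set xs = insert (Suc n) (set (ys @ zs))" unfolding yz by simp
    have "set (ys @ zs) = set xs - {Suc n}" unfolding e1 using nyz by auto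
    also have "\<dots> = {1..n}" unfolding d(2) by auto
    finally have s: "set (ys @ zs) = {1..n}" .
    have dd: "distinct (ys @ zs)" using d(1) yz by auto
    have ln: "length (ys @ zs) = n" using s dd
      by (metis card_atLeastAtMost diff_Suc_1 distinct_card)
    have "ys @ zs \<in> perms n" using s dd by (simp add: permutations_of_set_def)
    moreover have "length ys \<le> n" using ln by simp
    moreover have "xs = ins (length ys) (Suc n) (ys @ zs)" unfolding yz ins_def by simp
    ultimately show "xs \<in> (\<lambda>(p,j). ins j (Suc n) p) ` (perms n \<times> {..n})"
      by (intro image_eqI[where x = "(ys @ zs, length ys)"]) auto
  qed
qed

definition TR :: "nat \<Rightarrow> int poly \<Rightarrow> int poly" where
  "TR n P = X * (1 - X^2) * pderiv P + (2 * X + (of_nat n - 1) * X^2) * P"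

lemma pderiv_sum: "pderiv (sum f A) = (\<Sum>x\<in>A. pderiv (f x))"
  by (induction A rule: infinite_finite_induct) (auto simp: pderiv_add)

lemma TR_sum: "TR n (sum f A) = (\<Sum>x\<in>A. TR n (f x))"
  unfolding TR_def pderiv_sum by (simp add: sum_distrib_left sum.distrib)

lemma pderiv_X: "pderiv X = 1" by (simp add: X_def pderiv_pCons)

lemma TR_mono: "TR n (X ^ Suc t) = X * X ^ t * Q t n"
  unfolding TR_def Q_def pderiv_power_Suc pderiv_X of_nat_mult_conv_smult[symmetric]
  by (simp add: algebra_simps power2_eq_square)

lemma monom_X: "monom 1 k = X ^ k" by (simp add: monom_altdef X_def)

lemma R_X: "R n = (\<Sum>xs\<in>perms n. X ^ Suc (tpf xs))"
  by (simp add: R_def monom_X run_tpf)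

lemma perm_facts: "p \<in> perms n \<Longrightarrow> distinct p \<and> length p = n \<and> (\<forall>y\<in>set p. y < Suc n)"
  by (auto simp: permutations_of_set_def distinct_card[symmetric])

lemma R_rec:
  assumes "n \<ge> 2"
  shows "R (Suc n) = TR n (R n)"
proof -
  have "(\<Sum>x\<in>perms n \<times> {..n}. (\<lambda>xs. X ^ Suc (tpf xs)) ((\<lambda>(p,j). ins j (Suc n) p) x))
      = (\<Sum>xs\<in>perms (Suc n). X ^ Suc (tpf xs))"
    by (rule sum.reindex_bij_betw[OF ins_bij])
  then have "R (Suc n) = (\<Sum>p\<in>perms n. \<Sum>j\<le>n. X ^ Suc (tpf (ins j (Suc n) p)))"
    unfolding R_X by (simp add: sum.cartesian_product case_prod_unfold)
  also have "\<dots> = (\<Sum>p\<in>perms n. X * (\<Sum>j\<le>n. X ^ tpf (ins j (Suc n) p)))"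
    by (simp add: sum_distrib_left)
  also have "\<dots> = (\<Sum>p\<in>perms n. TR n (X ^ Suc (tpf p)))"
  proof (rule sum.cong[OF refl])
    fix p assume "p \<in> perms n"
    then have f: "distinct p" "length p = n" "\<forall>y\<in>set p. y < Suc n" using perm_facts by auto
    show "X * (\<Sum>j\<le>n. X ^ tpf (ins j (Suc n) p)) = TR n (X ^ Suc (tpf p))"
      using S_formula[OF f(1) f(3)] f(2) assms TR_mono[of n "tpf p"] by (simp del: power_Suc)
  qed
  also have "\<dots> = TR n (R n)" unfolding R_X TR_sum ..
  finally show ?thesis .
qed


definition Lop :: "nat \<Rightarrow> int poly \<Rightarrow> int poly" where
  "Lop n P = P + (of_nat n - 1) * X * P + (X - 2 * X^2) * pderiv P"

lemma Lop_Suc: "Lop (Suc n) P = Lop n P + X * P"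
  by (simp add: Lop_def algebra_simps)

lemma Lop_add: "Lop n (P + V) = Lop n P + Lop n V"
  by (simp add: Lop_def pderiv_add algebra_simps)

lemma Lop_smult: "Lop n (smult c P) = smult c (Lop n P)"
  by (simp add: Lop_def pderiv_smult smult_add_right smult_diff_right)

lemma Lop_sum: "Lop n (sum f A) = (\<Sum>x\<in>A. Lop n (f x))"
  by (induction A rule: infinite_finite_induct) (simp_all add: Lop_add, simp_all add: Lop_def)

lemma Lop_XPQ: "Lop (Suc (j + k)) (X * (P * V)) = X * (Lop j P * V + P * Lop k V)"
  by (simp add: Lop_def pderiv_mult pderiv_X algebra_simps power2_eq_square)

lemma pascal_sum:
  fixes a :: "nat \<Rightarrow> 'a::comm_ring_1"
  shows "(\<Sum>k\<in>{1..Suc m}. of_nat (Suc m choose k) * (a k * a (Suc (Suc m) - k))) =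
     a 1 * a (Suc m) + (\<Sum>k\<in>{1..m}. of_nat (m choose k) * (a (Suc k) * a (Suc m - k) + a k * a (Suc (Suc m) - k)))"
proof -
  have "(\<Sum>k\<in>{1..Suc m}. of_nat (Suc m choose k) * (a k * a (Suc (Suc m) - k)))
      = (\<Sum>j\<in>{0..m}. of_nat (Suc m choose Suc j) * (a (Suc j) * a (Suc (Suc m) - Suc j)))"
    using sum.shift_bounds_cl_Suc_ivl[of "\<lambda>k. of_nat (Suc m choose k) * (a k * a (Suc (Suc m) - k))" 0 m]
    by simp
  also have "\<dots> = (\<Sum>j\<le>m. of_nat (m choose j) * (a (Suc j) * a (Suc m - j)))
      + (\<Sum>j\<le>m. of_nat (m choose Suc j) * (a (Suc j) * a (Suc m - j)))"
    unfolding atMost_atLeast0 sum.distrib[symmetric] by (rule sum.cong) (simp_all add: algebra_simps)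
  also have "(\<Sum>j\<le>m. of_nat (m choose j) * (a (Suc j) * a (Suc m - j)))
      = a 1 * a (Suc m) + (\<Sum>j\<in>{1..m}. of_nat (m choose j) * (a (Suc j) * a (Suc m - j)))"
  proof -
    have "{..m} = insert 0 {1..m}" by auto
    then show ?thesis by simp
  qed
  also have "(\<Sum>j\<le>m. of_nat (m choose Suc j) * (a (Suc j) * a (Suc m - j)))
      = (\<Sum>k\<in>{1..m}. of_nat (m choose k) * (a k * a (Suc (Suc m) - k)))"
  proof -
    have "(\<Sum>j\<le>m. of_nat (m choose Suc j) * (a (Suc j) * a (Suc m - j)))
        = (\<Sum>k\<in>{1..Suc m}. of_nat (m choose k) * (a k * a (Suc (Suc m) - k)))"
      using sum.shift_bounds_cl_Suc_ivl[of "\<lambda>k. of_nat (m choose k) * (a k * a (Suc (Suc m) - k))" 0 m]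
      by (simp add: atMost_atLeast0)
    also have "\<dots> = (\<Sum>k\<in>{1..m}. of_nat (m choose k) * (a k * a (Suc (Suc m) - k)))"
      by (simp add: sum.cl_ivl_Suc binomial_eq_0)
    finally show ?thesis .
  qed
  finally show ?thesis by (simp add: sum.distrib algebra_simps)
qed


definition nodd :: "nat list \<Rightarrow> bool" where
  "nodd xs \<longleftrightarrow> (\<forall>i. 0 < i \<and> i + 1 < length xs \<longrightarrow> \<not> (xs!(i-1) > xs!i \<and> xs!i > xs!(i+1)))"
definition lasc :: "nat list \<Rightarrow> bool" where
  "lasc xs \<longleftrightarrow> (2 \<le> length xs \<longrightarrow> xs!(length xs - 2) < xs!(length xs - 1))"
definition valc :: "nat list \<Rightarrow> bool" where
  "valc xs \<longleftrightarrow> (\<forall>i. 0 < i \<and> i + 1 < length xs \<and> xs!(i-1) > xs!i \<and> xs!i < xs!(i+1) \<longrightarrow>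
          Max (set (fact_w2 xs i)) < Max (set (fact_w4 xs i)))"

lemma andre_alt: "andre xs \<longleftrightarrow> nodd xs \<and> lasc xs \<and> valc xs"
  unfolding andre_def nodd_def lasc_def valc_def by blast

lemma idx_cases:
  fixes i k l :: nat
  assumes "0 < i" "i + 1 < k + 1 + l"
  obtains "0 < i" "i + 1 < k" | "k \<ge> 2" "i = k - 1" | "k \<ge> 1" "l \<ge> 1" "i = k"
    | "l \<ge> 2" "i = k + 1" | j where "i = k + 1 + j" "0 < j" "j + 1 < l"
proof -
  have "i + 1 < k \<or> i + 1 = k \<or> i = k \<or> i = k + 1 \<or> i > k + 1" by arith
  then consider "i + 1 < k" | "i + 1 = k" | "i = k" | "i = k + 1" | "i > k + 1" by blast
  then show ?thesis
  proof cases
    case 1 then show ?thesis using that assms by auto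
  next
    case 2 then show ?thesis using that assms by auto
  next
    case 3 then show ?thesis using that assms by auto
  next
    case 4 then show ?thesis using that assms by auto
  next
    case 5
    then have "i = k + 1 + (i - k - 1)" "0 < i - k - 1" "(i - k - 1) + 1 < l" using assms by auto
    then show ?thesis using that(5) by blast
  qed
qed

lemma tw_skip: "\<not> P y \<Longrightarrow> takeWhile P (xs @ y # ys) = takeWhile P xs"
  by (induction xs) auto

lemma tw_all: "\<forall>x\<in>set xs. P x \<Longrightarrow> takeWhile P xs = xs"
  by (induction xs) auto

context
  fixes u v :: "nat list" and m :: nat
  assumes mmin: "\<forall>y \<in> set u \<union> set v. m < y"
begin

lemma wnth: "(u @ m # v) ! i = (if i < length u then u ! i else if i = length u then m else v ! (i - length u - 1))"
  by (simp add: nth_append nth_Cons')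

lemma L1: "nodd (u @ m # v) \<longleftrightarrow> nodd u \<and> (length u \<ge> 2 \<longrightarrow> \<not> u!(length u - 2) > u!(length u - 1)) \<and> nodd v"
proof
  assume h: "nodd (u @ m # v)"
  have "nodd u" unfolding nodd_def
  proof (intro allI impI)
    fix i assume i: "0 < i \<and> i + 1 < length u"
    then show "\<not> (u!(i-1) > u!i \<and> u!i > u!(i+1))"
      using h[unfolded nodd_def, rule_format, of i] by (auto simp: wnth split: if_splits)
  qed
  moreover have "length u \<ge> 2 \<longrightarrow> \<not> u!(length u - 2) > u!(length u - 1)"
  proof
    assume l: "length u \<ge> 2"
    have "u ! (length u - 1) \<in> set u" using l by simp
    then have "m < u ! (length u - 1)" using mmin by auto
    moreover have "(u @ m # v) ! (length u - 1 - 1) = u!(length u - 2)"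
      "(u @ m # v) ! (length u - 1) = u!(length u - 1)"
      "(u @ m # v) ! (length u - 1 + 1) = m" using l by (auto simp: nth_append numeral_2_eq_2)
    moreover have "0 < length u - 1 \<and> length u - 1 + 1 < length (u @ m # v)" using l by auto
    ultimately show "\<not> u!(length u - 2) > u!(length u - 1)"
      using h[unfolded nodd_def, rule_format, of "length u - 1"] by auto
  qed
  moreover have "nodd v" unfolding nodd_def
  proof (intro allI impI)
    fix i assume i: "0 < i \<and> i + 1 < length v"
    then show "\<not> (v!(i-1) > v!i \<and> v!i > v!(i+1))"
      using h[unfolded nodd_def, rule_format, of "length u + 1 + i"] by (auto simp: wnth split: if_splits)
  qed
  ultimately show "nodd u \<and> (length u \<ge> 2 \<longrightarrow> \<not> u!(length u - 2) > u!(length u - 1)) \<and> nodd v" by blast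
next
  assume h: "nodd u \<and> (length u \<ge> 2 \<longrightarrow> \<not> u!(length u - 2) > u!(length u - 1)) \<and> nodd v"
  show "nodd (u @ m # v)" unfolding nodd_def
  proof (intro allI impI)
    fix i assume i: "0 < i \<and> i + 1 < length (u @ m # v)"
    then have i': "0 < i" "i + 1 < length u + 1 + length v" by auto
    show "\<not> ((u @ m # v)!(i-1) > (u @ m # v)!i \<and> (u @ m # v)!i > (u @ m # v)!(i+1))"
    proof (cases rule: idx_cases[OF i'])
      case 1 then show ?thesis using h[unfolded nodd_def] by (auto simp: wnth split: if_splits)
    next
      case 2 then show ?thesis using h by (auto simp: wnth numeral_2_eq_2 Suc_diff_Suc split: if_splits)
    next
      case 3
      have "v ! 0 \<in> set v" using 3 by (cases v) auto
      then have "m < v ! 0" using mmin by auto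
      then show ?thesis using 3 by (auto simp: wnth split: if_splits)
    next
      case 4
      have "v ! 0 \<in> set v" using 4 by (cases v) auto
      then have "m < v ! 0" using mmin by auto
      then show ?thesis using 4 by (auto simp: wnth split: if_splits)
    next
      case (5 j) then show ?thesis using h[unfolded nodd_def, THEN conjunct2, THEN conjunct2, rule_format, of j]
        by (auto simp: wnth split: if_splits)
    qed
  qed
qed

lemma L2: "lasc (u @ m # v) \<longleftrightarrow> (if v = [] then u = [] else lasc v)"
proof (cases v)
  case Nil
  show ?thesis
  proof (cases "u = []")
    case False
    then have "u ! (length u - 1) \<in> set u" by simp
    then have "m < u ! (length u - 1)" using mmin by auto
    then show ?thesis using Nil False by (auto simp: lasc_def nth_append Suc_le_eq)
  qed (auto simp: lasc_def Nil)
next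
  case (Cons b v')
  show ?thesis
  proof (cases "v' = []")
    case True
    have "m < b" using mmin Cons by auto
    then show ?thesis using Cons True by (auto simp: lasc_def nth_append)
  next
    case False
    then have l2: "length v \<ge> 2" using Cons by (cases v') auto
    have e: "(u@m#v)!(length (u@m#v) - 2) = v!(length v - 2)"
      "(u@m#v)!(length (u@m#v) - 1) = v!(length v - 1)" using l2 by (auto simp: wnth numeral_2_eq_2 nth_Cons')
    show ?thesis using l2 Cons unfolding lasc_def e by simp
  qed
qed

lemma fw2_u: "i < length u \<Longrightarrow> fact_w2 (u @ m # v) i = fact_w2 u i"
  by (simp add: fact_w2_def nth_append)

lemma fw4_u: assumes "i < length u" shows "fact_w4 (u @ m # v) i = fact_w4 u i"
proof -
  have "u ! i \<in> set u" using assms by simp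
  then have mi: "m < u ! i" using mmin by auto
  have "drop (i+1) (u @ m # v) = drop (i+1) u @ m # v" using assms by simp
  then show ?thesis using assms mi by (simp add: fact_w4_def nth_append tw_skip)
qed

lemma fw2_v: assumes "j < length v" shows "fact_w2 (u @ m # v) (length u + 1 + j) = fact_w2 v j"
proof -
  have "v ! j \<in> set v" using assms by simp
  then have mi: "m < v ! j" using mmin by auto
  have "take (length u + 1 + j) (u @ m # v) = u @ m # take j v" by simp
  then have "rev (take (length u + 1 + j) (u @ m # v)) = rev (take j v) @ m # rev u" by simp
  then show ?thesis using assms mi by (simp add: fact_w2_def wnth tw_skip del: rev_append take_append)
qed

lemma fw4_v: "fact_w4 (u @ m # v) (length u + 1 + j) = fact_w4 v j"
proof -
  have "drop (length u + 1 + j + 1) (u @ m # v) = drop (j + 1) v" by simp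
  then show ?thesis by (simp add: fact_w4_def wnth)
qed

lemma fw2_m: "fact_w2 (u @ m # v) (length u) = u"
proof -
  show ?thesis using mmin by (simp add: fact_w2_def nth_append tw_all)
qed

lemma fw4_m: "fact_w4 (u @ m # v) (length u) = v"
  using mmin by (simp add: fact_w4_def nth_append tw_all)

lemma L3: "valc (u @ m # v) \<longleftrightarrow> valc u \<and> valc v \<and> (u \<noteq> [] \<and> v \<noteq> [] \<longrightarrow> Max (set u) < Max (set v))"
proof
  assume h: "valc (u @ m # v)"
  have "valc u" unfolding valc_def
  proof (intro allI impI)
    fix i assume i: "0 < i \<and> i + 1 < length u \<and> u!(i-1) > u!i \<and> u!i < u!(i+1)"
    have "(u @ m # v)!(i-1) = u!(i-1)" "(u @ m # v)!i = u!i" "(u @ m # v)!(i+1) = u!(i+1)"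
      using i by (auto simp: nth_append)
    then show "Max (set (fact_w2 u i)) < Max (set (fact_w4 u i))"
      using h[unfolded valc_def, rule_format, of i] i by (simp add: fw2_u fw4_u)
  qed
  moreover have "valc v" unfolding valc_def
  proof (intro allI impI)
    fix i assume i: "0 < i \<and> i + 1 < length v \<and> v!(i-1) > v!i \<and> v!i < v!(i+1)"
    have "(u @ m # v)!(length u + 1 + i - 1) = v!(i-1)" "(u @ m # v)!(length u + 1 + i) = v!i"
       "(u @ m # v)!(length u + 1 + i + 1) = v!(i+1)"
      using i by (auto simp: wnth)
    then show "Max (set (fact_w2 v i)) < Max (set (fact_w4 v i))"
      using h[unfolded valc_def, rule_format, of "length u + 1 + i"] i fw2_v[of i] fw4_v[of i] by simp
  qed
  moreover have "u \<noteq> [] \<and> v \<noteq> [] \<longrightarrow> Max (set u) < Max (set v)"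
  proof
    assume uv: "u \<noteq> [] \<and> v \<noteq> []"
    have "u ! (length u - 1) \<in> set u" "v ! 0 \<in> set v" using uv by auto
    then have "m < u ! (length u - 1)" "m < v ! 0" using mmin by auto
    moreover have "(u @ m # v)!(length u - 1) = u ! (length u - 1)" "(u @ m # v)!(length u) = m"
      "(u @ m # v)!(length u + 1) = v ! 0" using uv by (auto simp: nth_append)
    ultimately show "Max (set u) < Max (set v)"
      using h[unfolded valc_def, rule_format, of "length u"] uv by (simp add: fw2_m fw4_m)
  qed
  ultimately show "valc u \<and> valc v \<and> (u \<noteq> [] \<and> v \<noteq> [] \<longrightarrow> Max (set u) < Max (set v))" by blast
next
  assume h: "valc u \<and> valc v \<and> (u \<noteq> [] \<and> v \<noteq> [] \<longrightarrow> Max (set u) < Max (set v))"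
  show "valc (u @ m # v)" unfolding valc_def
  proof (intro allI impI)
    fix i assume i: "0 < i \<and> i + 1 < length (u @ m # v) \<and> (u @ m # v)!(i-1) > (u @ m # v)!i \<and> (u @ m # v)!i < (u @ m # v)!(i+1)"
    then have i': "0 < i" "i + 1 < length u + 1 + length v" by auto
    show "Max (set (fact_w2 (u @ m # v) i)) < Max (set (fact_w4 (u @ m # v) i))"
    proof (cases rule: idx_cases[OF i'])
      case 1
      have "(u @ m # v)!(i-1) = u!(i-1)" "(u @ m # v)!i = u!i" "(u @ m # v)!(i+1) = u!(i+1)"
        using 1 by (auto simp: nth_append)
      then show ?thesis using 1 i h[unfolded valc_def] by (simp add: fw2_u fw4_u)
    next
      case 2
      have "u ! (length u - 1) \<in> set u" using 2 by auto
      then have "m < u ! (length u - 1)" using mmin by auto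
      moreover have "(u @ m # v)!i = u ! (length u - 1)" "(u @ m # v)!(i+1) = m"
        using 2 by (auto simp: nth_append)
      ultimately show ?thesis using i by auto
    next
      case 3
      then have "u \<noteq> [] \<and> v \<noteq> []" by auto
      then show ?thesis using 3 h by (simp add: fw2_m fw4_m)
    next
      case 4
      have "v ! 0 \<in> set v" using 4 by (cases v) auto
      then have "m < v ! 0" using mmin by auto
      moreover have "(u @ m # v)!(i-1) = m" "(u @ m # v)!i = v ! 0"
        using 4 by (auto simp: nth_append)
      ultimately show ?thesis using i by auto
    next
      case (5 j)
      have "(u @ m # v)!(i-1) = v!(j-1)" "(u @ m # v)!i = v!j" "(u @ m # v)!(i+1) = v!(j+1)"
        using 5 by (auto simp: wnth)
      then show ?thesis using 5 i h[unfolded valc_def, THEN conjunct2, THEN conjunct1, rule_format, of j]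
        fw2_v[of j] fw4_v[of j] by simp
    qed
  qed
qed

end


lemma andre_split:
  assumes mmin: "\<forall>y \<in> set u \<union> set v. m < y" and du: "distinct u"
  shows "andre (u @ m # v) \<longleftrightarrow> (u = [] \<and> v = []) \<or>
           (v \<noteq> [] \<and> andre u \<and> andre v \<and> (u \<noteq> [] \<longrightarrow> Max (set u) < Max (set v)))"
proof -
  have lu: "lasc u \<longleftrightarrow> (length u \<ge> 2 \<longrightarrow> \<not> u!(length u - 2) > u!(length u - 1))"
  proof (cases "length u \<ge> 2")
    case True
    then have "u!(length u - 2) \<noteq> u!(length u - 1)" using du
      by (simp add: nth_eq_iff_index_eq)
    then show ?thesis unfolding lasc_def using True by auto
  qed (auto simp: lasc_def)
  have "nodd [] \<and> lasc [] \<and> valc []" by (simp add: nodd_def lasc_def valc_def)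
  then show ?thesis
    unfolding andre_alt L1[OF mmin] L2[OF mmin] L3[OF mmin] lu by auto
qed

fun desf :: "nat list \<Rightarrow> nat" where
  "desf (a#b#r) = (if b < a then 1 else 0) + desf (b#r)"
| "desf _ = 0"

lemma des_cons: "descents (a#b#r) = (if b < a then {0} else {}) \<union> Suc ` descents (b#r)"
  (is "?L = ?R")
proof (rule set_eqI)
  fix i show "i \<in> ?L \<longleftrightarrow> i \<in> ?R"
    by (cases i) (auto simp: descents_def)
qed

lemma des_short: "length xs < 2 \<Longrightarrow> descents xs = {}"
  by (auto simp: descents_def)

lemma des_finite: "finite (descents xs)"
  unfolding descents_def by (rule finite_subset[of _ "{..<length xs}"]) auto

lemma card_des: "card (descents xs) = desf xs"
proof (induction xs rule: desf.induct)
  case (1 a b r)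
  have "0 \<notin> Suc ` descents (b#r)" by auto
  then show ?case using 1 des_finite[of "b#r"]
    by (simp add: des_cons card_insert_if card_image)
qed (auto simp: des_short)

lemma desf_split: "\<forall>y \<in> set u \<union> set v. m < y \<Longrightarrow>
  desf (u @ m # v) = desf u + (if u = [] then 0 else 1) + desf v"
proof (induction u rule: desf.induct)
  case (1 a b r) then show ?case by simp
next
  case ("2_1") then show ?case by (cases v) auto
next
  case ("2_2" a) then show ?case by (cases v) auto
qed

definition oiso :: "(nat \<Rightarrow> nat) \<Rightarrow> nat set \<Rightarrow> bool" where
  "oiso f S \<longleftrightarrow> (\<forall>a\<in>S. \<forall>b\<in>S. f a < f b \<longleftrightarrow> a < b)"

lemma desf_map: "oiso f (set xs) \<Longrightarrow> desf (map f xs) = desf xs"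
  by (induction xs rule: desf.induct) (auto simp: oiso_def)

lemma oiso_Max:
  assumes "oiso f S" "B \<subseteq> S" "finite B" "B \<noteq> {}"
  shows "Max (f ` B) = f (Max B)"
proof (rule Max_eqI)
  show "finite (f ` B)" using assms by simp
  have mB: "Max B \<in> B" using assms by simp
  then show "f (Max B) \<in> f ` B" by simp
  fix y assume "y \<in> f ` B"
  then obtain b where b: "b \<in> B" "y = f b" by auto
  have "b \<le> Max B" using b assms by simp
  moreover have "Max B \<in> S" "b \<in> S" using assms(2) b mB by blast+
  ultimately show "y \<le> f (Max B)" using assms(1) b unfolding oiso_def by (meson not_le)
qed

lemma fw2_map:
  assumes "oiso f (set xs)" "i < length xs"
  shows "fact_w2 (map f xs) i = map f (fact_w2 xs i)"
proof -
  have "takeWhile (\<lambda>y. f (xs!i) < y) (map f (rev (take i xs))) =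
        map f (takeWhile (\<lambda>y. xs!i < y) (rev (take i xs)))"
    unfolding takeWhile_map
  proof (rule arg_cong[where f = "map f"], rule takeWhile_cong[OF refl])
    fix y assume "y \<in> set (rev (take i xs))"
    then have "y \<in> set xs" by (auto dest: in_set_takeD)
    then show "((\<lambda>y. f (xs!i) < y) \<circ> f) y = (xs!i < y)"
      using assms unfolding oiso_def by simp
  qed
  then show ?thesis using assms by (simp add: fact_w2_def rev_map take_map)
qed

lemma fw4_map:
  assumes "oiso f (set xs)" "i < length xs"
  shows "fact_w4 (map f xs) i = map f (fact_w4 xs i)"
proof -
  have "takeWhile (\<lambda>y. f (xs!i) < y) (map f (drop (Suc i) xs)) =
        map f (takeWhile (\<lambda>y. xs!i < y) (drop (Suc i) xs))"
    unfolding takeWhile_map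
  proof (rule arg_cong[where f = "map f"], rule takeWhile_cong[OF refl])
    fix y assume "y \<in> set (drop (Suc i) xs)"
    then have "y \<in> set xs" by (auto dest: in_set_dropD)
    then show "((\<lambda>y. f (xs!i) < y) \<circ> f) y = (xs!i < y)"
      using assms unfolding oiso_def by simp
  qed
  then show ?thesis using assms by (simp add: fact_w4_def drop_map)
qed

lemma fw2_ne: "0 < i \<Longrightarrow> i < length xs \<Longrightarrow> xs!(i-1) > xs!i \<Longrightarrow> fact_w2 xs i \<noteq> []"
proof -
  assume a: "0 < i" "i < length xs" "xs!(i-1) > xs!i"
  have "take i xs = take (i-1) xs @ [xs!(i-1)]" using a
    by (metis Suc_diff_1 diff_less less_trans take_Suc_conv_app_nth zero_less_one)
  then show ?thesis using a by (simp add: fact_w2_def)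
qed

lemma fw4_ne: "i + 1 < length xs \<Longrightarrow> xs!i < xs!(i+1) \<Longrightarrow> fact_w4 xs i \<noteq> []"
  by (simp add: fact_w4_def Cons_nth_drop_Suc[symmetric])

lemma tw_sub: "set (takeWhile P l) \<subseteq> set l"
  by (auto dest: set_takeWhileD)

lemma fw2_sub: "set (fact_w2 xs i) \<subseteq> set xs"
  using tw_sub[of _ "rev (take i xs)"] set_take_subset[of i xs] by (auto simp: fact_w2_def)

lemma fw4_sub: "set (fact_w4 xs i) \<subseteq> set xs"
  using tw_sub[of _ "drop (Suc i) xs"] set_drop_subset[of "Suc i" xs] by (auto simp: fact_w4_def)

lemma andre_map:
  assumes iso: "oiso f (set xs)"
  shows "andre (map f xs) \<longleftrightarrow> andre xs"
proof -
  have lt: "\<And>a b. a < length xs \<Longrightarrow> b < length xs \<Longrightarrow> f (xs!a) < f (xs!b) \<longleftrightarrow> xs!a < xs!b"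
    using iso unfolding oiso_def by auto
  have mx: "Max (set (fact_w2 (map f xs) i)) < Max (set (fact_w4 (map f xs) i)) \<longleftrightarrow>
            Max (set (fact_w2 xs i)) < Max (set (fact_w4 xs i))"
    if i: "0 < i" "i + 1 < length xs" "xs!(i-1) > xs!i" "xs!i < xs!(i+1)" for i
  proof -
    have ne: "fact_w2 xs i \<noteq> []" "fact_w4 xs i \<noteq> []" using i fw2_ne fw4_ne by auto
    have e: "Max (set (fact_w2 (map f xs) i)) = f (Max (set (fact_w2 xs i)))"
      "Max (set (fact_w4 (map f xs) i)) = f (Max (set (fact_w4 xs i)))"
      using i ne fw2_sub fw4_sub
      by (simp_all add: fw2_map[OF iso] fw4_map[OF iso] oiso_Max[OF iso])
    have "Max (set (fact_w2 xs i)) \<in> set xs" "Max (set (fact_w4 xs i)) \<in> set xs"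
      using ne fw2_sub fw4_sub by (meson List.finite_set Max_in set_empty subsetD)+
    then show ?thesis unfolding e using iso unfolding oiso_def by auto
  qed
  show ?thesis unfolding andre_def length_map
    apply (intro conj_cong all_cong imp_cong refl)
    using lt mx by (auto simp: nth_map)
qed


definition Ap :: "nat set \<Rightarrow> int poly" where
  "Ap S = (\<Sum>xs\<in>permutations_of_set S. if andre xs then X ^ desf xs else 0)"

lemma Ap_card:
  assumes "finite S"
  shows "Ap S = Ap {1..card S}"
proof -
  define L where "L = sorted_list_of_set S"
  define k where "k = card S"
  define f where "f i = L ! (i - 1)" for i
  have sL: "sorted_wrt (<) L" "set L = S" "length L = k"
    using assms by (simp_all add: L_def k_def strict_sorted_list_of_set)
  have lt: "a \<in> {1..k} \<Longrightarrow> b \<in> {1..k} \<Longrightarrow> a < b \<Longrightarrow> f a < f b" for a b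
    unfolding f_def using sL by (intro sorted_wrt_nth_less[OF sL(1)]) auto
  have iso: "oiso f {1..k}" unfolding oiso_def
  proof (intro ballI iffI)
    fix a b assume ab: "a \<in> {1..k}" "b \<in> {1..k}" "f a < f b"
    show "a < b"
    proof (rule ccontr)
      assume "\<not> a < b"
      then have "b < a \<or> a = b" by auto
      then show False using lt[of b a] ab by auto
    qed
  qed (use lt in auto)
  have inj: "inj_on f {1..k}"
  proof (rule inj_onI)
    fix a b assume ab: "a \<in> {1..k}" "b \<in> {1..k}" "f a = f b"
    show "a = b"
    proof (rule ccontr)
      assume "a \<noteq> b"
      then have "b < a \<or> a < b" by auto
      then show False using lt[of b a] lt[of a b] ab by auto
    qed
  qed
  have img: "f ` {1..k} = S"
  proof
    show "f ` {1..k} \<subseteq> S" using sL unfolding f_def by auto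
    show "S \<subseteq> f ` {1..k}"
    proof
      fix s assume "s \<in> S"
      then obtain j where j: "j < length L" "L ! j = s" using sL by (auto simp: in_set_conv_nth)
      then have "f (Suc j) = s" "Suc j \<in> {1..k}" using sL by (auto simp: f_def)
      then show "s \<in> f ` {1..k}" by (metis image_eqI)
    qed
  qed
  have P: "permutations_of_set S = map f ` permutations_of_set {1..k}"
    using permutations_of_set_image_inj[OF inj] img by simp
  have injm: "inj_on (map f) (permutations_of_set {1..k})"
  proof (rule inj_on_mapI, rule inj_on_subset[OF inj])
    show "\<Union> (set ` permutations_of_set {1..k}) \<subseteq> {1..k}"
      by (auto simp: permutations_of_set_def)
  qed
  have "Ap S = (\<Sum>ys\<in>permutations_of_set {1..k}. if andre (map f ys) then X ^ desf (map f ys) else 0)"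
    unfolding Ap_def P sum.reindex[OF injm] o_def ..
  also have "\<dots> = Ap {1..k}" unfolding Ap_def
  proof (rule sum.cong[OF refl])
    fix ys assume "ys \<in> permutations_of_set {1..k}"
    then have "oiso f (set ys)" using iso by (auto simp: permutations_of_set_def)
    then show "(if andre (map f ys) then X ^ desf (map f ys) else 0) = (if andre ys then X ^ desf ys else 0)"
      by (simp add: andre_map desf_map)
  qed
  finally show ?thesis by (simp add: k_def)
qed


lemma split_bij:
  assumes fin: "finite T" and mT: "m \<notin> T"
  shows "bij_betw (\<lambda>(S,(u,v)). u @ m # v)
     (SIGMA S:Pow T. permutations_of_set S \<times> permutations_of_set (T - S))
     (permutations_of_set (insert m T))"
proof (rule bij_betw_imageI)
  show "inj_on (\<lambda>(S,(u,v)). u @ m # v) (SIGMA S:Pow T. permutations_of_set S \<times> permutations_of_set (T - S))"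
  proof (rule inj_onI)
    fix x y
    assume x: "x \<in> (SIGMA S:Pow T. permutations_of_set S \<times> permutations_of_set (T - S))"
       and y: "y \<in> (SIGMA S:Pow T. permutations_of_set S \<times> permutations_of_set (T - S))"
       and eq0: "(\<lambda>(S,(u,v)). u @ m # v) x = (\<lambda>(S,(u,v)). u @ m # v) y"
    obtain S u v where xs: "x = (S,(u,v))" by (metis prod.collapse)
    obtain S' u' v' where ys: "y = (S',(u',v'))" by (metis prod.collapse)
    have h: "set u = S" "set u' = S'" "S \<subseteq> T" "S' \<subseteq> T"
      using x y xs ys by (auto simp: permutations_of_set_def)
    have "m \<notin> set u" "m \<notin> set u'" using h mT by auto
    moreover have "u @ m # v = u' @ m # v'" using eq0 xs ys by simp
    ultimately have "u = u' \<and> v = v'" by (rule append_Cons_same_eq)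
    then show "x = y" using xs ys h by auto
  qed
next
  show "(\<lambda>(S,(u,v)). u @ m # v) ` (SIGMA S:Pow T. permutations_of_set S \<times> permutations_of_set (T - S))
        = permutations_of_set (insert m T)"
  proof (rule set_eqI, rule iffI)
    fix xs assume "xs \<in> (\<lambda>(S,(u,v)). u @ m # v) ` (SIGMA S:Pow T. permutations_of_set S \<times> permutations_of_set (T - S))"
    then obtain S u v where h: "S \<subseteq> T" "u \<in> permutations_of_set S" "v \<in> permutations_of_set (T - S)"
      "xs = u @ m # v" by auto
    have su: "set u = S" "distinct u" "set v = T - S" "distinct v" using h by (auto simp: permutations_of_set_def)
    have "set xs = insert m T" using h(1,4) su by auto
    moreover have "distinct xs" using h(4) su mT h(1) by auto
    ultimately show "xs \<in> permutations_of_set (insert m T)" by (simp add: permutations_of_set_def)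
  next
    fix xs assume xs: "xs \<in> permutations_of_set (insert m T)"
    then have "m \<in> set xs" by (auto simp: permutations_of_set_def)
    then obtain u v where uv: "xs = u @ m # v" by (meson split_list)
    have d: "distinct xs" "set xs = insert m T" using xs by (auto simp: permutations_of_set_def)
    have nuv: "m \<notin> set u" "m \<notin> set v" "set u \<inter> set v = {}" "distinct u" "distinct v"
      using d(1) uv by auto
    have su: "set u \<subseteq> T" using d(2) uv nuv by auto
    have sv: "set v = T - set u" using d(2) uv nuv mT by auto
    show "xs \<in> (\<lambda>(S,(u,v)). u @ m # v) ` (SIGMA S:Pow T. permutations_of_set S \<times> permutations_of_set (T - S))"
      using su sv nuv uv
      by (intro image_eqI[where x = "(set u, (u, v))"]) (auto simp: permutations_of_set_def)
  qed
qed

lemma split_sum: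
  assumes fin: "finite T" and mT: "m \<notin> T"
  shows "(\<Sum>xs\<in>permutations_of_set (insert m T). F xs) =
     (\<Sum>S\<in>Pow T. \<Sum>u\<in>permutations_of_set S. \<Sum>v\<in>permutations_of_set (T - S). F (u @ m # v))"
proof -
  have "(\<Sum>x\<in>(SIGMA S:Pow T. permutations_of_set S \<times> permutations_of_set (T - S)).
           F ((\<lambda>(S,(u,v)). u @ m # v) x)) = (\<Sum>xs\<in>permutations_of_set (insert m T). F xs)"
    by (rule sum.reindex_bij_betw[OF split_bij[OF assms]])
  moreover have "(\<Sum>x\<in>(SIGMA S:Pow T. permutations_of_set S \<times> permutations_of_set (T - S)).
           F ((\<lambda>(S,(u,v)). u @ m # v) x)) =
     (\<Sum>S\<in>Pow T. \<Sum>u\<in>permutations_of_set S. \<Sum>v\<in>permutations_of_set (T - S). F (u @ m # v))"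
  proof -
    have "(\<Sum>S\<in>Pow T. \<Sum>u\<in>permutations_of_set S. \<Sum>v\<in>permutations_of_set (T - S). F (u @ m # v))
      = (\<Sum>S\<in>Pow T. \<Sum>p\<in>permutations_of_set S \<times> permutations_of_set (T - S). F (fst p @ m # snd p))"
      by (simp add: sum.cartesian_product case_prod_unfold)
    also have "\<dots> = (\<Sum>x\<in>(SIGMA S:Pow T. permutations_of_set S \<times> permutations_of_set (T - S)).
           F (fst (snd x) @ m # snd (snd x)))"
      using fin by (subst sum.Sigma) (simp_all add: case_prod_unfold)
    finally show ?thesis by (simp add: case_prod_unfold)
  qed
  ultimately show ?thesis by simp
qed

lemma sum_pow_card:
  assumes "finite A"
  shows "(\<Sum>S\<in>Pow A. g (card S)) = (\<Sum>k\<le>card A. of_nat (card A choose k) * g k)"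
proof -
  have "(\<Sum>S\<in>Pow A. g (card S)) = (\<Sum>k\<in>{..card A}. \<Sum>S\<in>{S\<in>Pow A. card S = k}. g (card S))"
    using assms by (intro sum.group[symmetric]) (auto simp: card_mono)
  also have "\<dots> = (\<Sum>k\<le>card A. of_nat (card A choose k) * g k)"
  proof (rule sum.cong[OF refl])
    fix k
    have "{S\<in>Pow A. card S = k} = {S. S \<subseteq> A \<and> card S = k}" by auto
    then have "card {S\<in>Pow A. card S = k} = card A choose k" using n_subsets[OF assms] by simp
    then show "(\<Sum>S\<in>{S\<in>Pow A. card S = k}. g (card S)) = of_nat (card A choose k) * g k"
      by simp
  qed
  finally show ?thesis .
qed

lemma sum_prod_c: "(\<Sum>u\<in>A. \<Sum>v\<in>B. c * (f u * g v)) = c * sum f A * sum g B"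
  for c :: "'a::comm_semiring_1"
proof -
  have "c * sum f A * sum g B = c * (\<Sum>u\<in>A. \<Sum>v\<in>B. f u * g v)" by (simp add: sum_product mult.assoc)
  also have "\<dots> = (\<Sum>u\<in>A. \<Sum>v\<in>B. c * (f u * g v))" by (simp add: sum_distrib_left)
  finally show ?thesis by simp
qed

definition Dp :: "nat \<Rightarrow> int poly" where "Dp k = Ap {1..k}"

lemma Ap_empty: "Ap {} = 1"
  by (simp add: Ap_def andre_def)

lemma D_conv:
  assumes "n \<ge> 1"
  shows "Dp (Suc n) = (\<Sum>k\<le>n-1. of_nat (n-1 choose k) * X ^ (if k = 0 then 0 else 1) * Dp k * Dp (n-k))"
proof -
  define T where "T = {2..Suc n}"
  have fT: "finite T" and mT: "1 \<notin> T" and iT: "insert 1 T = {1..Suc n}"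
    using assms by (auto simp: T_def)
  have mx: "Suc n \<in> T" "\<forall>y\<in>T. y \<le> Suc n" using assms by (auto simp: T_def)
  have "Dp (Suc n) = (\<Sum>S\<in>Pow T. \<Sum>u\<in>permutations_of_set S. \<Sum>v\<in>permutations_of_set (T - S).
           if andre (u @ 1 # v) then X ^ desf (u @ 1 # v) else 0)"
    unfolding Dp_def Ap_def iT[symmetric] by (rule split_sum[OF fT mT])
  also have "\<dots> = (\<Sum>S\<in>Pow (T - {Suc n}). X ^ (if S = {} then 0 else 1) * Ap S * Ap (T - S))"
  proof -
    have inner: "(\<Sum>u\<in>permutations_of_set S. \<Sum>v\<in>permutations_of_set (T - S).
           if andre (u @ 1 # v) then X ^ desf (u @ 1 # v) else 0) =
        (if Suc n \<in> S then 0 else X ^ (if S = {} then 0 else 1) * Ap S * Ap (T - S))"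
      if S: "S \<subseteq> T" for S
    proof -
      have tm: "(if andre (u @ 1 # v) then X ^ desf (u @ 1 # v) else 0) =
          (if Suc n \<in> S then 0 else X ^ (if S = {} then 0 else 1) *
             ((if andre u then X ^ desf u else 0) * (if andre v then X ^ desf v else 0)))"
        if uv: "u \<in> permutations_of_set S" "v \<in> permutations_of_set (T - S)" for u v
      proof -
        have su: "set u = S" "distinct u" "set v = T - S" using uv by (auto simp: permutations_of_set_def)
        have mmin: "\<forall>y\<in>set u \<union> set v. 1 < y" using su S by (auto simp: T_def)
        have ne: "\<not> (u = [] \<and> v = [])" using su mx by auto
        have ue: "u = [] \<longleftrightarrow> S = {}" using su by auto
        have key: "(v \<noteq> [] \<and> (u \<noteq> [] \<longrightarrow> Max (set u) < Max (set v))) \<longleftrightarrow> Suc n \<notin> S"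
        proof
          assume h: "v \<noteq> [] \<and> (u \<noteq> [] \<longrightarrow> Max (set u) < Max (set v))"
          show "Suc n \<notin> S"
          proof
            assume sn: "Suc n \<in> S"
            then have "u \<noteq> []" using su by auto
            then have "Max (set u) < Max (set v)" using h by auto
            moreover have "Max (set u) \<ge> Suc n" using sn su by (metis List.finite_set Max_ge)
            moreover have "Max (set v) \<in> set v" using h by simp
            then have "Max (set v) \<le> Suc n" using su mx by auto
            ultimately show False by linarith
          qed
        next
          assume sn: "Suc n \<notin> S"
          then have vs: "Suc n \<in> set v" using su mx by auto
          then have "v \<noteq> []" by auto
          moreover have "Max (set u) < Max (set v)" if "u \<noteq> []"
          proof -
            have "Max (set u) \<in> set u" using that by simp
            then have "Max (set u) < Suc n" using su S mx sn
              by (metis in_mono le_neq_implies_less)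
            moreover have "Suc n \<le> Max (set v)" using vs by simp
            ultimately show ?thesis by simp
          qed
          ultimately show "v \<noteq> [] \<and> (u \<noteq> [] \<longrightarrow> Max (set u) < Max (set v))" by blast
        qed
        show ?thesis
          unfolding andre_split[OF mmin su(2)] desf_split[OF mmin]
          using ne key ue by (auto simp: power_add)
      qed
      have "(\<Sum>u\<in>permutations_of_set S. \<Sum>v\<in>permutations_of_set (T - S).
           if andre (u @ 1 # v) then X ^ desf (u @ 1 # v) else 0) =
         (\<Sum>u\<in>permutations_of_set S. \<Sum>v\<in>permutations_of_set (T - S).
           (if Suc n \<in> S then 0 else X ^ (if S = {} then 0 else 1) *
             ((if andre u then X ^ desf u else 0) * (if andre v then X ^ desf v else 0))))"
        by (rule sum.cong[OF refl], rule sum.cong[OF refl], rule tm)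
      also have "\<dots> = (if Suc n \<in> S then 0 else X ^ (if S = {} then 0 else 1) * Ap S * Ap (T - S))"
        unfolding Ap_def by (cases "Suc n \<in> S") (simp_all only: sum_prod_c if_True if_False sum.neutral_const)
      finally show ?thesis .
    qed
    have "(\<Sum>S\<in>Pow T. \<Sum>u\<in>permutations_of_set S. \<Sum>v\<in>permutations_of_set (T - S).
           if andre (u @ 1 # v) then X ^ desf (u @ 1 # v) else 0) =
       (\<Sum>S\<in>Pow T. if Suc n \<in> S then 0 else X ^ (if S = {} then 0 else 1) * Ap S * Ap (T - S))"
      using inner by (intro sum.cong) auto
    also have "\<dots> = (\<Sum>S\<in>{S\<in>Pow T. Suc n \<notin> S}. X ^ (if S = {} then 0 else 1) * Ap S * Ap (T - S))"
      using fT by (subst sum.inter_filter) (auto intro!: sum.cong)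
    also have "{S\<in>Pow T. Suc n \<notin> S} = Pow (T - {Suc n})" by auto
    finally show ?thesis .
  qed
  also have "\<dots> = (\<Sum>S\<in>Pow (T - {Suc n}). X ^ (if card S = 0 then 0 else 1) * Dp (card S) * Dp (n - card S))"
  proof (rule sum.cong[OF refl])
    fix S assume S: "S \<in> Pow (T - {Suc n})"
    then have fS: "finite S" "S \<subseteq> T" using fT finite_subset by auto
    have cT: "card T = n" by (simp add: T_def)
    have "card (T - S) = n - card S" using fS fT cT by (simp add: card_Diff_subset)
    then show "X ^ (if S = {} then 0 else 1) * Ap S * Ap (T - S) =
        X ^ (if card S = 0 then 0 else 1) * Dp (card S) * Dp (n - card S)"
      using fS fT by (simp add: Dp_def Ap_card[of S] Ap_card[of "T - S"])
  qed
  also have "\<dots> = (\<Sum>k\<le>n-1. of_nat (n-1 choose k) * (X ^ (if k = 0 then 0 else 1) * Dp k * Dp (n-k)))"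
  proof -
    have "T - {Suc n} = {2..n}" using assms by (auto simp: T_def)
    then have "card (T - {Suc n}) = n - 1" by simp
    then show ?thesis using sum_pow_card[of "T - {Suc n}" "\<lambda>k. X ^ (if k = 0 then 0 else 1) * Dp k * Dp (n-k)"] fT
      by simp
  qed
  finally show ?thesis by (simp add: mult.assoc)
qed


lemma Dp0: "Dp 0 = 1" by (simp add: Dp_def Ap_empty)

lemma Dp1: "Dp 1 = 1"
  by (simp add: Dp_def Ap_def andre_def)

lemma Dp1': "Dp (Suc 0) = 1" using Dp1 by simp

lemma D_conv2: "Dp (Suc (Suc m)) = Dp (Suc m) + X * (\<Sum>k\<in>{1..m}. of_nat (m choose k) * (Dp k * Dp (Suc m - k)))"
proof -
  have "{..m} = insert 0 {1..m}" by auto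
  then show ?thesis using D_conv[of "Suc m"]
    by (simp add: Dp0 sum_distrib_left algebra_simps)
qed

lemma D_lin: "Dp (Suc (Suc m)) = Lop (Suc m) (Dp (Suc m))"
proof (induction m rule: less_induct)
  case (less m)
  show ?case
  proof (cases m)
    case 0
    then show ?thesis by (simp add: D_conv2 Dp1' Lop_def)
  next
    case (Suc m')
    have IHk: "Lop k (Dp k) = Dp (Suc k)" if "1 \<le> k" "k \<le> Suc m'" for k
    proof -
      define k' where "k' = k - 1"
      have k': "k = Suc k'" using that(1) by (simp add: k'_def)
      have "k' < m" using that k' Suc by simp
      then have "Dp (Suc (Suc k')) = Lop (Suc k') (Dp (Suc k'))" by (rule less)
      then show ?thesis using k' by simp
    qed
    define Y1 where "Y1 = (\<Sum>k\<in>{1..m'}. of_nat (m' choose k) * (Dp k * Dp (Suc m' - k)))"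
    have e1: "Dp (Suc (Suc m')) = Dp (Suc m') + X * Y1" unfolding Y1_def by (rule D_conv2)
    have "Lop (Suc (Suc m')) (X * Y1) = (\<Sum>k\<in>{1..m'}. smult (of_nat (m' choose k))
            (Lop (Suc (k + (Suc m' - k))) (X * (Dp k * Dp (Suc m' - k)))))"
    proof -
      have "X * Y1 = (\<Sum>k\<in>{1..m'}. smult (of_nat (m' choose k)) (X * (Dp k * Dp (Suc m' - k))))"
        unfolding Y1_def sum_distrib_left
        by (rule sum.cong[OF refl]) (simp add: of_nat_mult_conv_smult[symmetric] algebra_simps)
      then show ?thesis
        by (simp only: Lop_sum Lop_smult) (rule sum.cong, auto)
    qed
    also have "\<dots> = X * (\<Sum>k\<in>{1..m'}. of_nat (m' choose k) *
          (Dp (Suc k) * Dp (Suc m' - k) + Dp k * Dp (Suc (Suc m') - k)))"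
      unfolding sum_distrib_left
    proof (rule sum.cong[OF refl])
      fix k assume k: "k \<in> {1..m'}"
      have a: "Lop k (Dp k) = Dp (Suc k)" using k by (intro IHk) auto
      have b: "Lop (Suc m' - k) (Dp (Suc m' - k)) = Dp (Suc (Suc m') - k)"
        using k IHk[of "Suc m' - k"] by (simp add: Suc_diff_le)
      show "smult (of_nat (m' choose k)) (Lop (Suc (k + (Suc m' - k))) (X * (Dp k * Dp (Suc m' - k)))) =
          X * (of_nat (m' choose k) * (Dp (Suc k) * Dp (Suc m' - k) + Dp k * Dp (Suc (Suc m') - k)))"
        unfolding Lop_XPQ a b by (simp add: of_nat_mult_conv_smult[symmetric] algebra_simps)
    qed
    finally have e2: "Lop (Suc (Suc m')) (X * Y1) = X * (\<Sum>k\<in>{1..m'}. of_nat (m' choose k) *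
          (Dp (Suc k) * Dp (Suc m' - k) + Dp k * Dp (Suc (Suc m') - k)))" .
    have "Dp (Suc (Suc (Suc m'))) = Dp (Suc (Suc m')) + X * (\<Sum>k\<in>{1..Suc m'}. of_nat (Suc m' choose k) * (Dp k * Dp (Suc (Suc m') - k)))"
      by (rule D_conv2)
    also have "\<dots> = Dp (Suc (Suc m')) + X * (Dp (Suc m') + (\<Sum>k\<in>{1..m'}. of_nat (m' choose k) *
          (Dp (Suc k) * Dp (Suc m' - k) + Dp k * Dp (Suc (Suc m') - k))))"
      unfolding pascal_sum Dp1 by simp
    also have "\<dots> = Lop (Suc (Suc m')) (Dp (Suc (Suc m')))"
    proof -
      have "Lop (Suc (Suc m')) (Dp (Suc (Suc m'))) = Lop (Suc (Suc m')) (Dp (Suc m')) + Lop (Suc (Suc m')) (X * Y1)"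
        by (simp only: e1 Lop_add)
      moreover have "m' < m" using Suc by simp
      then have "Dp (Suc (Suc m')) = Lop (Suc m') (Dp (Suc m'))" by (rule less)
      then have "Lop (Suc (Suc m')) (Dp (Suc m')) = Dp (Suc (Suc m')) + X * Dp (Suc m')"
        by (simp only: Lop_Suc[of "Suc m'"])
      ultimately show ?thesis unfolding e2 by (simp add: algebra_simps)
    qed
    finally show ?thesis using Suc by simp
  qed
qed


lemma coeff_Xpow: "coeff (X ^ k) i = (if k = i then 1 else 0)"
  by (simp add: monom_X[symmetric] coeff_monom)

lemma d_coeff: "int (d n i) = coeff (Dp n) i"
proof -
  have "coeff (Dp n) i = (\<Sum>xs\<in>perms n. if andre xs \<and> desf xs = i then 1 else 0)"
    unfolding Dp_def Ap_def coeff_sum by (rule sum.cong) (auto simp: coeff_Xpow)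
  also have "\<dots> = int (card {xs \<in> perms n. andre xs \<and> desf xs = i})"
  proof -
    have "perms n \<inter> {xs. andre xs \<and> desf xs = i} = {xs \<in> perms n. andre xs \<and> desf xs = i}" by auto
    then show ?thesis by (simp add: sum.If_cases)
  qed
  finally show ?thesis by (simp add: d_def card_des)
qed

lemma X_mult: "X * P = pCons 0 P" by (simp add: X_def)

lemma const_mult: "(of_nat n - 1 :: int poly) * P = smult (int n - 1) P"
  by (simp add: of_nat_mult_conv_smult smult_diff_left left_diff_distrib)

lemma two_mult: "(2 :: int poly) * P = smult 2 P"
  by (metis of_nat_mult_conv_smult of_nat_numeral)

lemma Lop_alt: "Lop n P = P + smult (int n - 1) (pCons 0 P) + pCons 0 (pderiv P)
    - smult 2 (pCons 0 (pCons 0 (pderiv P)))"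
proof -
  have "Lop n P = P + (of_nat n - 1) * (X * P) + X * pderiv P - 2 * (X * (X * pderiv P))"
    by (simp add: Lop_def algebra_simps power2_eq_square)
  then show ?thesis by (simp only: const_mult two_mult X_mult)
qed

lemma coeff_Lop0: "coeff (Lop n P) 0 = coeff P 0"
  by (simp add: Lop_alt)

lemma coeff_LopS: "coeff (Lop n P) (Suc i) =
   of_nat (i+2) * coeff P (Suc i) + (int n - 1 - 2 * int i) * coeff P i"
proof (cases i)
  case 0 then show ?thesis by (simp add: Lop_alt coeff_pderiv algebra_simps)
next
  case (Suc i') then show ?thesis by (simp add: Lop_alt coeff_pderiv algebra_simps)
qed

lemma d_rec0: "n \<ge> 1 \<Longrightarrow> d (Suc n) 0 = d n 0"
proof -
  assume "n \<ge> 1"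
  then obtain m where m: "n = Suc m" by (cases n) auto
  have "int (d (Suc n) 0) = int (d n 0)"
    unfolding d_coeff m D_lin coeff_Lop0 ..
  then show ?thesis by simp
qed

lemma d_rec: "n \<ge> 1 \<Longrightarrow> int (d (Suc n) (Suc i)) =
   of_nat (i+2) * int (d n (Suc i)) + (int n - 1 - 2 * int i) * int (d n i)"
proof -
  assume "n \<ge> 1"
  then obtain m where m: "n = Suc m" by (cases n) auto
  show ?thesis unfolding d_coeff m D_lin coeff_LopS ..
qed

lemma d1: "d 1 0 = 1" using d_coeff[of 1 0] by (simp add: Dp1')

lemma d1': "d 1 (Suc i) = 0" using d_coeff[of 1 "Suc i"] by (simp add: Dp1')

lemma d_vanish: "n \<ge> 1 \<Longrightarrow> n \<le> 2 * j \<Longrightarrow> d n j = 0"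
proof (induction n arbitrary: j rule: nat_induct_at_least)
  case base
  then show ?case using d1' by (cases j) auto
next
  case (Suc n)
  then obtain i where j: "j = Suc i" by (cases j) auto
  have a: "d n (Suc i) = 0" using Suc j by auto
  have b: "(int n - 1 - 2 * int i) * int (d n i) = 0"
  proof (cases "n \<le> 2 * i")
    case True then show ?thesis using Suc by simp
  next
    case False then have "int n - 1 - 2 * int i = 0" using Suc j by simp
    then show ?thesis by simp
  qed
  have "int (d (Suc n) j) = 0" unfolding j d_rec[OF Suc(1)] a b by simp
  then show ?case by simp
qed

lemma d_pos: "n \<ge> 1 \<Longrightarrow> d n ((n + 1) div 2 - 1) > 0"
proof (induction n rule: nat_induct_at_least)
  case base then show ?case using d1 by simp
next
  case (Suc n)
  have ih: "d n ((n + 1) div 2 - 1) > 0" by (rule Suc.IH)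
  show ?case
  proof (cases "even n")
    case True
    then obtain p where p: "n = 2 * p" by (rule evenE)
    then have p1: "p \<ge> 1" using Suc(1) by simp
    define i where "i = p - 1"
    have i: "p = Suc i" using p1 by (simp add: i_def)
    have idx: "(Suc n + 1) div 2 - 1 = Suc i" unfolding p i by simp
    have idx2: "(n + 1) div 2 - 1 = i" unfolding p i by simp
    have z: "d n (Suc i) = 0" using d_vanish[OF Suc(1)] unfolding p i by simp
    have c: "int n - 1 - 2 * int i = 1" unfolding p i by simp
    have pos: "d n i > 0" using ih unfolding idx2 .
    have "int (d (Suc n) (Suc i)) = int (d n i)" unfolding d_rec[OF Suc(1)] z c by simp
    then show ?thesis unfolding idx using pos by simp
  next
    case False
    then obtain p where p: "n = 2 * p + 1" by (rule oddE)
    show ?thesis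
    proof (cases p)
      case 0
      then have n1: "n = 1" using p by simp
      have d20: "d 2 0 = 1" using d_rec0[of 1] d1 by (simp add: numeral_2_eq_2)
      have i0: "(Suc n + 1) div 2 - 1 = 0" using n1 by simp
      have e: "Suc n = 2" using n1 by simp
      show ?thesis unfolding i0 e using d20 by simp
    next
      case (Suc i)
      have idx: "(Suc n + 1) div 2 - 1 = Suc i" unfolding p Suc by simp
      have idx2: "(n + 1) div 2 - 1 = Suc i" unfolding p Suc by simp
      have pos: "d n (Suc i) > 0" using ih unfolding idx2 .
      have c: "int n - 1 - 2 * int i = 2" unfolding p Suc by simp
      have ge: "int (d n i) \<ge> 0" by simp
      have "int (d (Suc n) (Suc i)) = of_nat (i+2) * int (d n (Suc i)) + 2 * int (d n i)"
        unfolding d_rec[OF \<open>1 \<le> n\<close>] c ..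
      moreover have "of_nat (i+2) * int (d n (Suc i)) > 0" using pos by simp
      ultimately have "int (d (Suc n) (Suc i)) > 0" using ge by linarith
      then show ?thesis unfolding idx by simp
    qed
  qed
qed


definition Bp :: "nat \<Rightarrow> nat \<Rightarrow> int poly" where
  "Bp n j = X ^ Suc j * (1 + X) ^ (n - 2 - j)"

definition En :: "nat \<Rightarrow> int poly" where
  "En n = (\<Sum>j<n. smult (int (d n j)) (Bp n j))"

lemma pderiv_1X: "pderiv (1 + X) = 1"
  by (simp add: pderiv_add pderiv_X)

lemma TR_smult: "TR n (smult c P) = smult c (TR n P)"
  by (simp add: TR_def pderiv_smult smult_add_right smult_diff_right)

lemma of_int_mult_smult: "of_int k * p = smult k (p :: int poly)"
  by (simp add: of_int_poly)

lemma pdX: "pderiv (X ^ Suc j) = of_nat (Suc j) * X ^ j"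
  by (simp only: pderiv_power_Suc pderiv_X of_nat_mult_conv_smult mult_1_right)

lemma pd1X: "pderiv ((1 + X) ^ Suc j) = of_nat (Suc j) * (1 + X) ^ j"
  by (simp only: pderiv_power_Suc pderiv_1X of_nat_mult_conv_smult mult_1_right)

lemma TR_B:
  assumes "n = j + m + 2"
  shows "TR n (X ^ Suc j * (1 + X) ^ m) =
    of_nat (Suc j) * (X ^ Suc j * (1 + X) ^ Suc m)
    + (of_nat n - 1 - 2 * of_nat j) * (X ^ Suc (Suc j) * (1 + X) ^ m)"
proof (cases m)
  case 0
  have "TR n (X ^ Suc j * (1 + X) ^ m) = X * (1 - X^2) * (of_nat (Suc j) * X ^ j)
     + (2 * X + (of_nat n - 1) * X^2) * X ^ Suc j"
    unfolding TR_def pderiv_mult pdX 0 by simp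
  then show ?thesis using assms 0 by (simp add: algebra_simps power2_eq_square)
next
  case (Suc m')
  have "TR n (X ^ Suc j * (1 + X) ^ m) = X * (1 - X^2) * (X ^ Suc j * (of_nat (Suc m') * (1 + X) ^ m')
     + (1 + X) ^ Suc m' * (of_nat (Suc j) * X ^ j))
     + (2 * X + (of_nat n - 1) * X^2) * (X ^ Suc j * (1 + X) ^ Suc m')"
    unfolding TR_def pderiv_mult pdX pd1X Suc by simp
  then show ?thesis using assms Suc by (simp add: algebra_simps power2_eq_square)
qed

lemma TR_Bp:
  assumes "j + 2 \<le> n"
  shows "TR n (Bp n j) = of_nat (Suc j) * Bp (Suc n) j + (of_nat n - 1 - 2 * of_nat j) * Bp (Suc n) (Suc j)"
proof -
  have "Suc n - 2 - j = Suc (n - 2 - j)" "Suc n - 2 - Suc j = n - 2 - j" using assms by auto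
  then show ?thesis unfolding Bp_def using TR_B[of n j "n - 2 - j"] assms by simp
qed

lemma TR_E:
  assumes n2: "n \<ge> 2"
  shows "TR n (En n) = En (Suc n)"
proof -
  let ?B = "Bp (Suc n)"
  have n1: "n \<ge> 1" using n2 by simp
  have "TR n (En n) = (\<Sum>j<n. smult (int (d n j)) (TR n (Bp n j)))"
    unfolding En_def TR_sum TR_smult ..
  also have "\<dots> = (\<Sum>j<n. smult (int (Suc j) * int (d n j)) (?B j)
      + smult ((int n - 1 - 2 * int j) * int (d n j)) (?B (Suc j)))"
  proof (rule sum.cong[OF refl])
    fix j assume j: "j \<in> {..<n}"
    show "smult (int (d n j)) (TR n (Bp n j)) = smult (int (Suc j) * int (d n j)) (?B j)
      + smult ((int n - 1 - 2 * int j) * int (d n j)) (?B (Suc j))"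
    proof (cases "j + 2 \<le> n")
      case True
      show ?thesis unfolding TR_Bp[OF True]
        by (simp add: of_int_mult_smult[symmetric] algebra_simps)
    next
      case False
      then have "d n j = 0" using j n2 by (intro d_vanish) auto
      then show ?thesis by simp
    qed
  qed
  also have "\<dots> = (\<Sum>j<n. smult (int (Suc j) * int (d n j)) (?B j))
      + (\<Sum>j<n. smult ((int n - 1 - 2 * int j) * int (d n j)) (?B (Suc j)))"
    by (rule sum.distrib)
  also have "\<dots> = En (Suc n)"
  proof -
    define G where "G j = (case j of 0 \<Rightarrow> 0 | Suc i \<Rightarrow> (int n - 1 - 2 * int i) * int (d n i))" for j
    have dj: "int (d (Suc n) j) = int (Suc j) * int (d n j) + G j" for j
    proof (cases j)
      case 0 then show ?thesis using d_rec0[OF n1] by (simp add: G_def)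
    next
      case (Suc i) then show ?thesis using d_rec[OF n1, of i] by (simp add: G_def algebra_simps)
    qed
    have "En (Suc n) = (\<Sum>j<Suc n. smult (int (Suc j) * int (d n j)) (?B j))
       + (\<Sum>j<Suc n. smult (G j) (?B j))"
      unfolding En_def dj smult_add_left sum.distrib ..
    also have "(\<Sum>j<Suc n. smult (int (Suc j) * int (d n j)) (?B j)) =
               (\<Sum>j<n. smult (int (Suc j) * int (d n j)) (?B j))"
      using d_vanish[OF n1, of n] by simp
    also have "(\<Sum>j<Suc n. smult (G j) (?B j)) =
               (\<Sum>j<n. smult ((int n - 1 - 2 * int j) * int (d n j)) (?B (Suc j)))"
      unfolding sum.lessThan_Suc_shift by (simp add: G_def)
    finally show ?thesis ..
  qed
  finally show ?thesis .
qed

lemma R2: "R 2 = smult 2 X"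
proof -
  have e: "{1..2::nat} = {1,2}" by auto
  have "perms 2 = {[1,2],[2,1]}"
    unfolding e by (rule permutations_of_set_doubleton) simp
  then show ?thesis by (simp add: R_X two_mult)
qed

lemma En2: "En 2 = X"
proof -
  have d20: "d 2 0 = 1" using d_rec0[of 1] d1 by (simp add: numeral_2_eq_2)
  have d21: "d 2 1 = 0" using d_vanish[of 2 1] by simp
  show ?thesis unfolding En_def using d20 d21 by (simp add: numeral_2_eq_2 Bp_def)
qed

lemma R_E: "n \<ge> 2 \<Longrightarrow> R n = smult 2 (En n)"
proof (induction n rule: nat_induct_at_least)
  case base then show ?case by (simp add: R2 En2)
next
  case (Suc n)
  then show ?case by (simp add: R_rec TR_smult TR_E)
qed


lemma X1: "[:1, 1:] = 1 + X" by (simp add: X_def one_pCons)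

definition nnp :: "int poly \<Rightarrow> bool" where "nnp p \<longleftrightarrow> (\<forall>i. coeff p i \<ge> 0)"

lemma nnp_mult: "nnp p \<Longrightarrow> nnp q \<Longrightarrow> nnp (p * q)"
  unfolding nnp_def coeff_mult by (auto intro!: sum_nonneg)

lemma nnp_add: "nnp p \<Longrightarrow> nnp q \<Longrightarrow> nnp (p + q)"
  unfolding nnp_def by (auto intro!: add_nonneg_nonneg)

lemma nnp_sum: "(\<And>x. x \<in> A \<Longrightarrow> nnp (f x)) \<Longrightarrow> nnp (sum f A)"
  by (induction A rule: infinite_finite_induct) (auto simp: nnp_add, auto simp: nnp_def)

lemma nnp_smult: "c \<ge> 0 \<Longrightarrow> nnp p \<Longrightarrow> nnp (smult c p)"
  unfolding nnp_def by auto

lemma nnp_power: "nnp p \<Longrightarrow> nnp (p ^ k)"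
  by (induction k) (auto simp: nnp_mult, auto simp: nnp_def coeff_1)

lemma nnp_pCons: "a \<ge> 0 \<Longrightarrow> nnp p \<Longrightarrow> nnp (pCons a p)"
  unfolding nnp_def by (auto simp: coeff_pCons split: nat.split)

lemma nnp_0: "nnp 0" by (simp add: nnp_def)

lemma M_alt: "M n = smult 2 (\<Sum>k=1..(n + 1) div 2. smult (int (d n (k - 1))) (X ^ k * (1 + X) ^ ((n + 1) div 2 - k)))"
  by (simp add: M_def Let_def X1 X_def[symmetric] two_mult)

theorem mainTheorem6:
  fixes n :: nat
  assumes "n \<ge> 2"
  defines "l \<equiv> (n + 1) div 2"
  shows "R n = [:1, 1:] ^ ((n - 2) div 2) * M n
     \<and> (\<forall>i. coeff (M n) i \<ge> 0)
     \<and> poly (M n) (-1) = 2 * (-1) ^ l * int (d n (l - 1))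
     \<and> poly (M n) (-1) \<noteq> 0
     \<and> order (-1) (R n) = (n - 2) div 2"
proof -
  define e where "e = (n - 2) div 2"
  have le: "l + e = n - 1" unfolding l_def e_def using assms by presburger
  have l1: "l \<ge> 1" "l \<le> n" unfolding l_def using assms by auto
  have Malt: "M n = smult 2 (\<Sum>k=1..l. smult (int (d n (k - 1))) (X ^ k * (1 + X) ^ (l - k)))"
    unfolding M_alt l_def ..
  have fact: "R n = [:1, 1:] ^ e * M n"
  proof -
    have "[:1, 1:] ^ e * M n = smult 2 (\<Sum>j<l. smult (int (d n j)) (Bp n j))"
    proof -
      have "[:1, 1:] ^ e * M n = smult 2 (\<Sum>k=1..l. smult (int (d n (k - 1))) (X ^ k * (1 + X) ^ (e + (l - k))))"
        unfolding Malt X1 mult_smult_right sum_distrib_left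
        by (simp only: power_add mult_smult_right mult_ac)
      also have "\<dots> = smult 2 (\<Sum>j<l. smult (int (d n j)) (Bp n j))"
      proof -
        have eq: "smult (int (d n (Suc j - 1))) (X ^ Suc j * (1 + X) ^ (e + (l - Suc j))) =
              smult (int (d n j)) (Bp n j)" if j: "j < l" for j
        proof -
          have "e + (l - Suc j) = n - 2 - j" using le j by auto
          then show ?thesis by (simp add: Bp_def)
        qed
        have "(\<Sum>k=1..l. smult (int (d n (k - 1))) (X ^ k * (1 + X) ^ (e + (l - k)))) =
              (\<Sum>j<l. smult (int (d n (Suc j - 1))) (X ^ Suc j * (1 + X) ^ (e + (l - Suc j))))"
          by (simp only: One_nat_def sum.atLeast1_atMost_eq)
        also have "\<dots> = (\<Sum>j<l. smult (int (d n j)) (Bp n j))"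
          by (rule sum.cong[OF refl], rule eq, simp)
        finally show ?thesis by simp
      qed
      finally show ?thesis .
    qed
    also have "(\<Sum>j<l. smult (int (d n j)) (Bp n j)) = En n"
    proof -
      have "En n = (\<Sum>j\<in>{0..<l}. smult (int (d n j)) (Bp n j)) + (\<Sum>j\<in>{l..<n}. smult (int (d n j)) (Bp n j))"
        unfolding En_def lessThan_atLeast0 using l1 by (simp add: sum.atLeastLessThan_concat)
      also have "(\<Sum>j\<in>{l..<n}. smult (int (d n j)) (Bp n j)) = 0"
      proof (rule sum.neutral, rule ballI)
        fix j assume "j \<in> {l..<n}"
        then have "n \<le> 2 * j" unfolding l_def by auto
        then have "d n j = 0" using assms by (intro d_vanish) auto
        then show "smult (int (d n j)) (Bp n j) = 0" by simp
      qed
      finally show ?thesis by (simp add: lessThan_atLeast0)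
    qed
    finally show ?thesis using R_E[OF assms(1)] by simp
  qed
  have nn: "\<forall>i. coeff (M n) i \<ge> 0"
  proof -
    have "nnp X" unfolding X_def by (intro nnp_pCons nnp_0) auto
    moreover have "nnp (1 + X)" unfolding X1[symmetric] by (intro nnp_pCons nnp_0) auto
    ultimately have "nnp (M n)" unfolding Malt
      by (intro nnp_smult nnp_sum nnp_mult nnp_power) auto
    then show ?thesis by (simp add: nnp_def)
  qed
  have val: "poly (M n) (-1) = 2 * (-1) ^ l * int (d n (l - 1))"
  proof -
    obtain l' where l': "l = Suc l'" using l1 by (cases l) auto
    have pX: "poly X (-1) = -1" "poly (1 + X) (-1) = 0" by (simp_all add: X_def)
    have "poly (M n) (-1) = 2 * (\<Sum>k=1..l. int (d n (k - 1)) * ((-1) ^ k * 0 ^ (l - k)))"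
      unfolding Malt by (simp add: poly_sum pX)
    also have "(\<Sum>k=1..l. int (d n (k - 1)) * ((-1) ^ k * 0 ^ (l - k))) = (-1) ^ l * int (d n (l - 1))"
    proof -
      have "(\<Sum>k=1..l. int (d n (k - 1)) * ((-1) ^ k * 0 ^ (l - k))) =
            (\<Sum>k=1..l'. int (d n (k - 1)) * ((-1) ^ k * 0 ^ (l - k))) + int (d n l') * (-1) ^ l"
        unfolding l' by (simp add: sum.cl_ivl_Suc)
      also have "(\<Sum>k=1..l'. int (d n (k - 1)) * ((-1) ^ k * 0 ^ (l - k))) = 0"
        by (rule sum.neutral) (auto simp: l')
      finally show ?thesis by (simp add: l')
    qed
    finally show ?thesis by simp
  qed
  have nz: "poly (M n) (-1) \<noteq> 0"
  proof -
    have "d n (l - 1) > 0" unfolding l_def using assms by (intro d_pos) auto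
    then show ?thesis unfolding val by simp
  qed
  have ord: "order (-1) (R n) = e"
  proof -
    have Mnz: "M n \<noteq> 0" using nz by auto
    have pw: "[:1, 1:] ^ e = ([:- (-1), 1:] :: int poly) ^ e" by simp
    have ne: "[:1, 1:] ^ e * M n \<noteq> 0" using Mnz by simp
    have "order (-1) (M n) = 0" using nz order_root by blast
    moreover have "order (-1) ([:1,1:]^e * M n) = order (-1) ([:1,1:]^e :: int poly) + order (-1) (M n)"
      using order_mult[OF ne] by simp
    moreover have "order (-1) ([:1,1:]^e :: int poly) = e"
      using order_power_n_n[of "-1::int" e] by simp
    ultimately show ?thesis unfolding fact by simp
  qed
  show ?thesis using fact nn val nz ord unfolding e_def by blast
qed


end
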